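(* Let $f,g,\phi,c,\eta,w,\alpha,x_0,G,\Psi$ satisfy the following: $f,g\in C(\mathbb{R}_0^+\times\mathbb{R}_0^+,\mathbb{R}_0^+)$ are nondecreasing in the first variable for each fixed second variable; $\phi\in C(\mathbb{R}_0^+,\mathbb{R}_0^+)$ is strictly increasing with $\lim_{x\to\infty}\phi(x)=\infty$; $c\in C(\mathbb{R}_0^+,\mathbb{R}^+)$ is nondecreasing; $\eta,w\in C(\mathbb{R}_0^+,\mathbb{R}_0^+)$ are nondecreasing and positive on $(0,\infty)$; $\alpha\in C^1(\mathbb{R}_0^+,\mathbb{R}_0^+)$ is nondecreasing with $\alpha(t)\le t$; and $x_0,G,\Psi$ are as in the context. Suppose $u\in C(\mathbb{R}_0^+,\mathbb{R}_0^+)$ satisfies, for all $t\ge0$, $$\phi(u(t))\le c(t)+\int_0^{\alpha(t)}f(t,s)\,\eta(u(s))\,w(u(s))\,ds+\int_0^{t}g(t,s)\,\eta(u(s))\,w(u(s))\,ds.$$ Let $\tau>0$ be such that for all $t\in[0,\tau]$, $$\Psi(G(c(t)))+\int_0^{\alpha(t)}f(t,s)\,ds+\int_0^{t}g(t,s)\,ds\in\mathrm{Dom}(\Psi^{-1}).$$ Then for all $t\in[0,\tau]$, $$u(t)\le\phi^{-1}\Big\{G^{-1}\Big(\Psi^{-1}\Big[\Psi(G(c(t)))+\int_0^{\alpha(t)}f(t,s)\,ds+\int_0^{t}g(t,s)\,ds\Big]\Big)\Big\}.$$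
   Context: $\mathbb{R}_0^+=[0,\infty)$, $\mathbb{R}^+=(0,\infty)$. $\phi^{-1}$ denotes the inverse of $\phi$, defined on $[\phi(0),\infty)$. The constant $x_0$ is a real number with $\phi(0)\le x_0<c(0)$ such that $\int_{x_0}^x\frac{ds}{\eta(\phi^{-1}(s))}<\infty$ for every $x\ge x_0$ and $\int_{x_0}^\infty\frac{ds}{\eta(\phi^{-1}(s))}=\infty$ (in the paper: $x_0>0$ may be required when $\int_0^x\frac{ds}{\eta(\phi^{-1}(s))}=\infty$, and $x_0\ge0$ is allowed when this integral is finite). Define $G:[x_0,\infty)\to[0,\infty)$ by $G(x)=\int_{x_0}^x\frac{ds}{\eta(\phi^{-1}(s))}$; it is a strictly increasing bijection with inverse $G^{-1}$. Fix $x_1>0$ and define, for $x>0$, $\Psi(x)=\int_{x_1}^x\frac{ds}{w(\phi^{-1}(G^{-1}(s)))}$; $\Psi$ is strictly increasing on $(0,\infty)$, $\Psi^{-1}$ is its inverse and $\mathrm{Dom}(\Psi^{-1})=\Psi((0,\infty))$. *)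

theory Defs
  imports "HOL-Analysis.Analysis"
begin

definition phi_inv :: "(real \<Rightarrow> real) \<Rightarrow> real \<Rightarrow> real" where
  "phi_inv phi = the_inv_into {0..} phi"

text \<open>G(x) = int_{x0}^x ds / eta(phi^{-1}(s)) (Lebesgue integral; improper at x0 allowed).\<close>
definition G_fun :: "(real \<Rightarrow> real) \<Rightarrow> (real \<Rightarrow> real) \<Rightarrow> real \<Rightarrow> real \<Rightarrow> real" where
  "G_fun phi eta x0 x = (LBINT s=x0..x. 1 / eta (phi_inv phi s))"

definition G_inv :: "(real \<Rightarrow> real) \<Rightarrow> (real \<Rightarrow> real) \<Rightarrow> real \<Rightarrow> real \<Rightarrow> real" where
  "G_inv phi eta x0 = the_inv_into {x0..} (G_fun phi eta x0)"

text \<open>Psi(x) = int_{x1}^x ds / w(phi^{-1}(G^{-1}(s))), signed (oriented) integral, for x > 0.\<close>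
definition Psi_fun :: "(real \<Rightarrow> real) \<Rightarrow> (real \<Rightarrow> real) \<Rightarrow> (real \<Rightarrow> real) \<Rightarrow> real \<Rightarrow> real \<Rightarrow> real \<Rightarrow> real" where
  "Psi_fun phi eta w x0 x1 x = (LBINT s=x1..x. 1 / w (phi_inv phi (G_inv phi eta x0 s)))"

definition Psi_inv :: "(real \<Rightarrow> real) \<Rightarrow> (real \<Rightarrow> real) \<Rightarrow> (real \<Rightarrow> real) \<Rightarrow> real \<Rightarrow> real \<Rightarrow> real \<Rightarrow> real" where
  "Psi_inv phi eta w x0 x1 = the_inv_into {0<..} (Psi_fun phi eta w x0 x1)"

end

theory Submission
  imports Defs
begin

lemma inv_lemma:
  fixes h :: "real \<Rightarrow> real" and a :: real
  assumes cont: "\<And>b. b \<ge> a \<Longrightarrow> continuous_on {a..b} h"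
    and sm: "strict_mono_on {a..} h"
    and lim: "filterlim h at_top at_top"
  shows "\<And>y. y \<ge> h a \<Longrightarrow> the_inv_into {a..} h y \<ge> a \<and> h (the_inv_into {a..} h y) = y"
    and "\<And>x. x \<ge> a \<Longrightarrow> the_inv_into {a..} h (h x) = x"
    and "\<And>y1 y2. h a \<le> y1 \<Longrightarrow> y1 \<le> y2 \<Longrightarrow> the_inv_into {a..} h y1 \<le> the_inv_into {a..} h y2"
    and "\<And>b. continuous_on {h a..b} (the_inv_into {a..} h)"
proof -
  have inj: "inj_on h {a..}" using sm strict_mono_on_imp_inj_on by blast
  have big: "\<exists>M\<ge>a. h M \<ge> y" for y
  proof -
    have "eventually (\<lambda>x. y \<le> h x) at_top" using lim by (simp add: filterlim_at_top)
    then obtain N where "\<forall>x\<ge>N. y \<le> h x" by (auto simp: eventually_at_top_linorder)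
    then show ?thesis by (intro exI[of _ "max a N"]) auto
  qed
  have img: "y \<in> h ` {a..M}" if "h a \<le> y" "y \<le> h M" "a \<le> M" for y M
  proof -
    from IVT'[of h a y M] that cont[of M] obtain x where "a \<le> x" "x \<le> M" "h x = y" by auto
    then show ?thesis by auto
  qed
  have img2: "y \<in> h ` {a..}" if "h a \<le> y" for y
  proof -
    obtain M where "M \<ge> a" "h M \<ge> y" using big by blast
    then have "y \<in> h ` {a..M}" using img that by blast
    then show ?thesis by auto
  qed
  show 1: "the_inv_into {a..} h y \<ge> a \<and> h (the_inv_into {a..} h y) = y" if "y \<ge> h a" for y
    using the_inv_into_into[OF inj img2[OF that], of "{a..}"] f_the_inv_into_f[OF inj img2[OF that]] by auto
  show 2: "the_inv_into {a..} h (h x) = x" if "x \<ge> a" for x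
    using the_inv_into_f_f[OF inj] that by auto
  show "the_inv_into {a..} h y1 \<le> the_inv_into {a..} h y2" if "h a \<le> y1" "y1 \<le> y2" for y1 y2
  proof (rule ccontr)
    assume "\<not> ?thesis"
    then have "h (the_inv_into {a..} h y2) < h (the_inv_into {a..} h y1)"
      using 1[of y1] 1[of y2] that by (intro strict_mono_onD[OF sm]) auto
    then show False using 1[of y1] 1[of y2] that by auto
  qed
  show "continuous_on {h a..b} (the_inv_into {a..} h)" for b
  proof -
    obtain M where M: "M \<ge> a" "h M \<ge> b" using big by blast
    have "continuous_on (h ` {a..M}) (the_inv_into {a..} h)"
      by (rule continuous_on_inv[OF cont[OF M(1)]]) (auto intro: 2)
    moreover have "{h a..b} \<subseteq> h ` {a..M}" using img M by auto
    ultimately show ?thesis using continuous_on_subset by blast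
  qed
qed


lemma int_deriv0:
  fixes k :: "real \<Rightarrow> real"
  assumes "continuous_on {0..} k" "x \<ge> 0"
  shows "((\<lambda>y. integral {0..y} k) has_real_derivative k x) (at x within {0..})"
proof -
  have "((\<lambda>y. integral {0..y} k) has_real_derivative k x) (at x within {0..x+1})"
    by (rule integral_has_real_derivative) (use assms in \<open>auto intro: continuous_on_subset\<close>)
  moreover have "at x within {0..} = at x within {0..x+1}"
    by (rule at_within_nhd[of _ "{..<x+1}"]) auto
  ultimately show ?thesis by simp
qed

lemma int_comp_deriv:
  fixes k \<alpha> :: "real \<Rightarrow> real"
  assumes k: "continuous_on {0..} k" and S: "open S" "t \<in> S" "\<alpha> ` S \<subseteq> {0..}"
    and d: "(\<alpha> has_real_derivative a') (at t)"
  shows "((\<lambda>x. integral {0..\<alpha> x} k) has_real_derivative k (\<alpha> t) * a') (at t)"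
proof -
  have "\<alpha> t \<ge> 0" using S by auto
  from int_deriv0[OF k this] have "((\<lambda>y. integral {0..y} k) has_real_derivative k (\<alpha> t)) (at (\<alpha> t) within \<alpha> ` S)"
    using DERIV_subset S(3) by blast
  from DERIV_image_chain[OF this has_field_derivative_at_within[OF d]]
  have "((\<lambda>x. integral {0..\<alpha> x} k) has_real_derivative k (\<alpha> t) * a') (at t within S)"
    by (simp add: o_def)
  then show ?thesis using at_within_open[OF S(2,1)] by simp
qed

lemma mono_deriv_nonneg:
  fixes \<alpha> :: "real \<Rightarrow> real"
  assumes "mono_on {0..} \<alpha>" "t > 0" "(\<alpha> has_real_derivative a') (at t)"
  shows "a' \<ge> 0"
proof (rule ccontr)
  assume "\<not> a' \<ge> 0"
  then obtain d where d: "d > 0" "\<forall>h>0. h < d \<longrightarrow> \<alpha> (t + h) < \<alpha> t"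
    using DERIV_neg_dec_right[OF assms(3)] by force
  then have "\<alpha> (t + d/2) < \<alpha> t" by auto
  moreover have "\<alpha> t \<le> \<alpha> (t + d/2)" using assms d by (intro mono_onD[OF assms(1)]) auto
  ultimately show False by simp
qed


lemma int_cont0:
  fixes k :: "real \<Rightarrow> real"
  assumes "continuous_on {0..} k"
  shows "continuous_on {0..b} (\<lambda>y. integral {0..y} k)"
  by (rule indefinite_integral_continuous_1[OF integrable_continuous_interval])
     (use assms in \<open>auto intro: continuous_on_subset\<close>)

lemma int_nonneg0:
  fixes k :: "real \<Rightarrow> real"
  assumes "continuous_on {0..} k" "\<And>s. s \<ge> 0 \<Longrightarrow> k s \<ge> 0"
  shows "integral {0..x} k \<ge> 0"
  by (rule integral_nonneg[OF integrable_continuous_interval]) 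
     (use assms in \<open>auto intro: continuous_on_subset\<close>)

lemma int_mono0:
  fixes k :: "real \<Rightarrow> real"
  assumes "continuous_on {0..} k" "\<And>s. s \<ge> 0 \<Longrightarrow> k s \<ge> 0" "x \<le> y"
  shows "integral {0..x} k \<le> integral {0..y} k"
  by (rule integral_subset_le[OF _ integrable_continuous_interval integrable_continuous_interval]) 
     (use assms in \<open>auto intro: continuous_on_subset\<close>)

theorem theorem2:
  fixes f g :: "real \<Rightarrow> real \<Rightarrow> real"
    and phi c eta w alpha u :: "real \<Rightarrow> real"
    and x0 x1 \<tau> :: real
  assumes f_cont: "continuous_on ({0..} \<times> {0..}) (\<lambda>(t, s). f t s)"
      and f_nonneg: "\<And>t s. t \<ge> 0 \<Longrightarrow> s \<ge> 0 \<Longrightarrow> f t s \<ge> 0"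
      and f_mono: "\<And>s. s \<ge> 0 \<Longrightarrow> mono_on {0..} (\<lambda>t. f t s)"
      and g_cont: "continuous_on ({0..} \<times> {0..}) (\<lambda>(t, s). g t s)"
      and g_nonneg: "\<And>t s. t \<ge> 0 \<Longrightarrow> s \<ge> 0 \<Longrightarrow> g t s \<ge> 0"
      and g_mono: "\<And>s. s \<ge> 0 \<Longrightarrow> mono_on {0..} (\<lambda>t. g t s)"
      and phi_cont: "continuous_on {0..} phi"
      and phi_nonneg: "\<And>x. x \<ge> 0 \<Longrightarrow> phi x \<ge> 0"
      and phi_strict: "strict_mono_on {0..} phi"
      and phi_lim: "filterlim phi at_top at_top"
      and c_cont: "continuous_on {0..} c"
      and c_pos: "\<And>t. t \<ge> 0 \<Longrightarrow> c t > 0"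
      and c_mono: "mono_on {0..} c"
      and eta_cont: "continuous_on {0..} eta"
      and eta_nonneg: "\<And>x. x \<ge> 0 \<Longrightarrow> eta x \<ge> 0"
      and eta_mono: "mono_on {0..} eta"
      and eta_pos: "\<And>x. x > 0 \<Longrightarrow> eta x > 0"
      and w_cont: "continuous_on {0..} w"
      and w_nonneg: "\<And>x. x \<ge> 0 \<Longrightarrow> w x \<ge> 0"
      and w_mono: "mono_on {0..} w"
      and w_pos: "\<And>x. x > 0 \<Longrightarrow> w x > 0"
      and alpha_C1: "\<exists>alpha'. continuous_on {0..} alpha' \<and>
                       (\<forall>t\<ge>0. (alpha has_real_derivative alpha' t) (at t within {0..}))"
      and alpha_nonneg: "\<And>t. t \<ge> 0 \<Longrightarrow> alpha t \<ge> 0"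
      and alpha_mono: "mono_on {0..} alpha"
      and alpha_le: "\<And>t. t \<ge> 0 \<Longrightarrow> alpha t \<le> t"
      and x0_ge: "phi 0 \<le> x0"
      and x0_lt: "x0 < c 0"
      and G_finite: "\<And>x. x \<ge> x0 \<Longrightarrow>
                       set_integrable lborel {x0..x} (\<lambda>s. 1 / eta (phi_inv phi s))"
      and G_infinite: "filterlim (G_fun phi eta x0) at_top at_top"
      and x1_pos: "x1 > 0"
      and u_cont: "continuous_on {0..} u"
      and u_nonneg: "\<And>t. t \<ge> 0 \<Longrightarrow> u t \<ge> 0"
      and u_ineq: "\<And>t. t \<ge> 0 \<Longrightarrow>
         phi (u t) \<le> c t
           + integral {0..alpha t} (\<lambda>s. f t s * eta (u s) * w (u s))
           + integral {0..t} (\<lambda>s. g t s * eta (u s) * w (u s))"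
      and tau_pos: "\<tau> > 0"
      and tau_dom: "\<And>t. t \<in> {0..\<tau>} \<Longrightarrow>
         Psi_fun phi eta w x0 x1 (G_fun phi eta x0 (c t))
           + integral {0..alpha t} (\<lambda>s. f t s) + integral {0..t} (\<lambda>s. g t s)
         \<in> Psi_fun phi eta w x0 x1 ` {0<..}"
  shows "\<And>t. t \<in> {0..\<tau>} \<Longrightarrow>
     u t \<le> phi_inv phi (G_inv phi eta x0 (Psi_inv phi eta w x0 x1
             (Psi_fun phi eta w x0 x1 (G_fun phi eta x0 (c t))
              + integral {0..alpha t} (\<lambda>s. f t s) + integral {0..t} (\<lambda>s. g t s))))"
proof -
  fix T assume T: "T \<in> {0..\<tau>}"
  define pinv where "pinv = phi_inv phi"
  define G where "G = G_fun phi eta x0"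
  define Gi where "Gi = G_inv phi eta x0"
  define Ps where "Ps = Psi_fun phi eta w x0 x1"
  define k where "k = (\<lambda>s. 1 / eta (pinv s))"
  define hP where "hP = (\<lambda>s. 1 / w (pinv (Gi s)))"
  have pinv_eq: "pinv = the_inv_into {0..} phi" by (simp add: pinv_def phi_inv_def)
  have phi_cb: "\<And>b. b \<ge> 0 \<Longrightarrow> continuous_on {0..b} phi"
    by (rule continuous_on_subset[OF phi_cont]) auto
  note PL = inv_lemma[where a=0 and h=phi, OF phi_cb phi_strict phi_lim, folded pinv_eq]
  have P1: "\<And>y. y \<ge> phi 0 \<Longrightarrow> pinv y \<ge> 0 \<and> phi (pinv y) = y" by (rule PL(1))
  have P2: "\<And>x. x \<ge> 0 \<Longrightarrow> pinv (phi x) = x" by (rule PL(2))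
  have P3: "\<And>y1 y2. phi 0 \<le> y1 \<Longrightarrow> y1 \<le> y2 \<Longrightarrow> pinv y1 \<le> pinv y2" by (rule PL(3))
  have P4: "\<And>b. continuous_on {phi 0..b} pinv" by (rule PL(4))
  have P5: "pinv y > 0" if "y > phi 0" for y
  proof -
    have "pinv y \<ge> 0" "phi (pinv y) = y" using P1[of y] that by auto
    then show ?thesis using that by (cases "pinv y = 0") auto
  qed
  have phi_ge: "x \<ge> 0 \<Longrightarrow> phi x \<ge> phi 0" for x
    using phi_strict by (auto intro: strict_mono_on_leD)
  have k_cont: "continuous_on {a..b} k" if "a > phi 0" for a b
  proof -
    have "continuous_on {a..b} pinv" using P4[of b] that by (auto intro: continuous_on_subset)
    moreover have "pinv ` {a..b} \<subseteq> {0..}" using P1 that by force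
    ultimately have "continuous_on {a..b} (\<lambda>s. eta (pinv s))"
      using continuous_on_compose2[OF eta_cont] by blast
    moreover have "eta (pinv s) \<noteq> 0" if "s \<in> {a..b}" for s
      using eta_pos[OF P5[of s]] that \<open>a > phi 0\<close> by force
    ultimately show ?thesis unfolding k_def by (intro continuous_intros) auto
  qed
  have k_pos: "k s > 0" if "s > phi 0" for s
    using eta_pos[OF P5[OF that]] by (simp add: k_def)
  have k_nonneg: "k s \<ge> 0" if "s \<ge> phi 0" for s
    using eta_nonneg P1[OF that] by (simp add: k_def)
  have k_int: "k integrable_on {x0..x}" if "x \<ge> x0" for x
    using set_borel_integral_eq_integral(1)[OF G_finite[OF that]] by (simp add: k_def pinv_def)
  have G_eq: "G x = integral {x0..x} k" if "x \<ge> x0" for x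
    unfolding G_def G_fun_def using interval_integral_eq_integral[OF that G_finite[OF that]]
    by (simp add: k_def pinv_def)
  have G_cont: "continuous_on {x0..b} G" if "b \<ge> x0" for b
    using indefinite_integral_continuous_1[OF k_int[OF that]] 
    by (rule continuous_on_eq) (simp add: G_eq)
  have G0: "G x0 = 0" using G_eq[of x0] by simp
  have G_nonneg: "G x \<ge> 0" if "x \<ge> x0" for x
    using G_eq[OF that] k_nonneg x0_ge by (auto intro!: integral_nonneg k_int that)
  have G_deriv: "(G has_real_derivative k x) (at x)" if "x > x0" for x
  proof -
    define a where "a = (x0 + x) / 2"
    have a: "x0 < a" "a < x" using that by (auto simp: a_def)
    have eq: "G y = G a + integral {a..y} k" if "y \<in> {a<..}" for y
      using G_eq[of y] G_eq[of a] a that Henstock_Kurzweil_Integration.integral_combine[of x0 a y k] k_int[of y] by auto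
    have "((\<lambda>y. integral {a..y} k) has_real_derivative k x) (at x within {a..x+1})"
      by (rule integral_has_real_derivative) (use k_cont[of a "x+1"] a x0_ge in auto)
    then have "((\<lambda>y. integral {a..y} k) has_real_derivative k x) (at x within {a<..<x+1})"
      by (rule DERIV_subset) auto
    then have "((\<lambda>y. integral {a..y} k) has_real_derivative k x) (at x)"
      using at_within_open[of x "{a<..<x+1}"] a by auto
    then have "((\<lambda>y. G a + integral {a..y} k) has_real_derivative k x) (at x)"
      by (auto intro!: derivative_eq_intros)
    then show ?thesis
      by (rule has_field_derivative_transform_within_open[of _ _ _ "{a<..}"]) (use a eq in auto)
  qed
  have G_strict: "strict_mono_on {x0..} G"
  proof (rule strict_mono_onI)
    have lt: "G x < G y" if "x0 < x" "x < y" for x y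
    proof (rule DERIV_pos_imp_increasing[OF that(2)])
      fix z assume "x \<le> z" "z \<le> y"
      then have "z > x0" "z > phi 0" using that x0_ge by auto
      then show "\<exists>d. (G has_real_derivative d) (at z) \<and> d > 0"
        using G_deriv k_pos by blast
    qed
    fix x y assume "x \<in> {x0..}" "y \<in> {x0..}" "x < y"
    then show "G x < G y"
    proof (cases "x = x0")
      case True
      then show ?thesis using lt[of "(x0+y)/2" y] G_nonneg[of "(x0+y)/2"] G0 \<open>x < y\<close> by auto
    qed (use lt in auto)
  qed
  have Gi_eq: "Gi = the_inv_into {x0..} G" by (simp add: Gi_def G_def G_inv_def)
  note QL = inv_lemma[where a=x0 and h=G, OF G_cont G_strict G_infinite[folded G_def], folded Gi_eq, unfolded G0]
  have Q1: "\<And>y. y \<ge> 0 \<Longrightarrow> Gi y \<ge> x0 \<and> G (Gi y) = y" by (rule QL(1))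
  have Q2: "\<And>x. x \<ge> x0 \<Longrightarrow> Gi (G x) = x" by (rule QL(2))
  have Q3: "\<And>y1 y2. 0 \<le> y1 \<Longrightarrow> y1 \<le> y2 \<Longrightarrow> Gi y1 \<le> Gi y2" by (rule QL(3))
  have Q4: "\<And>b. continuous_on {0..b} Gi" by (rule QL(4))
  have Q5: "Gi y > x0" if "y > 0" for y
  proof -
    have "Gi y \<ge> x0" "G (Gi y) = y" using Q1[of y] that by auto
    then show ?thesis using that G0 by (cases "Gi y = x0") auto
  qed
  have G_pos: "G x > 0" if "x > x0" for x
    using strict_mono_onD[OF G_strict, of x0 x] that G0 by auto
  have hP_cont: "continuous_on {a..b} hP" if "a > 0" for a b
  proof -
    have c1: "continuous_on {a..b} Gi" using Q4[of b] that by (auto intro: continuous_on_subset)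
    have "Gi ` {a..b} \<subseteq> {phi 0..Gi b}"
    proof
      fix z assume "z \<in> Gi ` {a..b}"
      then obtain s where s: "s \<in> {a..b}" "z = Gi s" by auto
      then have "Gi s \<ge> x0" "Gi s \<le> Gi b" using Q1[of s] Q3[of s b] that by auto
      then show "z \<in> {phi 0..Gi b}" using s x0_ge by auto
    qed
    then have c2: "continuous_on {a..b} (\<lambda>s. pinv (Gi s))"
      using continuous_on_compose2[OF P4 c1] by blast
    have "(\<lambda>s. pinv (Gi s)) ` {a..b} \<subseteq> {0..}"
    proof
      fix z assume "z \<in> (\<lambda>s. pinv (Gi s)) ` {a..b}"
      then obtain s where s: "s \<in> {a..b}" "z = pinv (Gi s)" by auto
      then have "Gi s \<ge> x0" using Q1[of s] that by auto
      then show "z \<in> {0..}" using P1[of "Gi s"] s x0_ge by auto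
    qed
    then have c3: "continuous_on {a..b} (\<lambda>s. w (pinv (Gi s)))"
      using continuous_on_compose2[OF w_cont c2] by blast
    have "w (pinv (Gi s)) \<noteq> 0" if "s \<in> {a..b}" for s
    proof -
      have "Gi s > x0" using Q5[of s] that \<open>a > 0\<close> by auto
      then have "pinv (Gi s) > 0" using P5 x0_ge by auto
      then show ?thesis using w_pos by force
    qed
    then show ?thesis unfolding hP_def using c3 by (intro continuous_intros) auto
  qed
  have hP_pos: "hP s > 0" if "s > 0" for s
  proof -
    have "Gi s > x0" using Q5[of s] that by auto
    then have "pinv (Gi s) > 0" using P5 x0_ge by auto
    then show ?thesis using w_pos by (simp add: hP_def)
  qed
  have Ps_eq: "Ps = (\<lambda>u. LBINT s=x1..u. hP s)"
    by (simp add: Ps_def Psi_fun_def[abs_def] hP_def pinv_def Gi_def)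
  have Ps_deriv: "(Ps has_real_derivative hP y) (at y)" if "y > 0" for y
  proof -
    define a where "a = min x1 y / 2"
    define b where "b = max x1 y + 1"
    have ab: "0 < a" "a < y" "y < b" "a \<le> x1" "x1 \<le> b" using that x1_pos by (auto simp: a_def b_def)
    have "((\<lambda>u. LBINT s=x1..u. hP s) has_vector_derivative hP y) (at y within {a..b})"
      by (rule interval_integral_FTC2) (use hP_cont[of a b] ab in auto)
    then have "(Ps has_real_derivative hP y) (at y within {a..b})"
      by (simp add: Ps_eq has_real_derivative_iff_has_vector_derivative)
    then have "(Ps has_real_derivative hP y) (at y within {a<..<b})"
      by (rule DERIV_subset) auto
    then show ?thesis using at_within_open[of y "{a<..<b}"] ab by auto
  qed
  have Ps_strict: "Ps y1 < Ps y2" if "0 < y1" "y1 < y2" for y1 y2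
  proof (rule DERIV_pos_imp_increasing[OF that(2)])
    fix z assume "y1 \<le> z" "z \<le> y2"
    then have "z > 0" using that by auto
    then show "\<exists>d. (Ps has_real_derivative d) (at z) \<and> d > 0"
      using Ps_deriv hP_pos by blast
  qed
  have K_deriv: "((\<lambda>x. Ps (G x)) has_real_derivative (1 / w (pinv x)) * k x) (at x)" if "x > x0" for x
  proof -
    have "hP (G x) = 1 / w (pinv x)" using Q2[of x] that by (simp add: hP_def)
    then show ?thesis using DERIV_chain2[OF Ps_deriv[OF G_pos[OF that]] G_deriv[OF that]] by simp
  qed
  have T0: "0 \<le> T" "T \<le> \<tau>" using T by auto
  obtain alpha' where a_der: "\<forall>t\<ge>0. (alpha has_real_derivative alpha' t) (at t within {0..})"
    using alpha_C1 by blast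
  have a_der_at: "(alpha has_real_derivative alpha' t) (at t)" if "t > 0" for t
  proof -
    have "at t within {0..} = at t within UNIV" by (rule at_within_nhd[of _ "{0<..}"]) (use that in auto)
    moreover have "(alpha has_real_derivative alpha' t) (at t within {0..})" using a_der that by auto
    ultimately show ?thesis by simp
  qed
  have alpha_cont: "continuous_on {0..} alpha"
    using a_der by (auto simp: continuous_on_eq_continuous_within intro: DERIV_continuous)
  have alpha0: "alpha 0 = 0" using alpha_nonneg[of 0] alpha_le[of 0] by auto
  have a_nn: "alpha' t \<ge> 0" if "t > 0" for t using mono_deriv_nonneg[OF alpha_mono that a_der_at[OF that]] .
  have fc: "continuous_on {0..} (\<lambda>s. f t s)" if "t \<ge> 0" for t
  proof -
    have "continuous_on {0..} (\<lambda>x. (\<lambda>(t, s). f t s) ((\<lambda>s. (t,s)) x))"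
      by (rule continuous_on_compose2[OF f_cont]) (use that in \<open>auto intro!: continuous_intros\<close>)
    then show ?thesis by simp
  qed
  have gc: "continuous_on {0..} (\<lambda>s. g t s)" if "t \<ge> 0" for t
  proof -
    have "continuous_on {0..} (\<lambda>x. (\<lambda>(t, s). g t s) ((\<lambda>s. (t,s)) x))"
      by (rule continuous_on_compose2[OF g_cont]) (use that in \<open>auto intro!: continuous_intros\<close>)
    then show ?thesis by simp
  qed
  have etau: "continuous_on {0..} (\<lambda>s. eta (u s))"
    by (rule continuous_on_compose2[OF eta_cont u_cont]) (use u_nonneg in auto)
  have wu: "continuous_on {0..} (\<lambda>s. w (u s))"
    by (rule continuous_on_compose2[OF w_cont u_cont]) (use u_nonneg in auto)
  have fkc: "continuous_on {0..} (\<lambda>s. f t s * eta (u s) * w (u s))" if "t \<ge> 0" for t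
    by (intro continuous_on_mult fc[OF that] etau wu)
  have gkc: "continuous_on {0..} (\<lambda>s. g t s * eta (u s) * w (u s))" if "t \<ge> 0" for t
    by (intro continuous_on_mult gc[OF that] etau wu)
  define k1 where "k1 = (\<lambda>s. f T s * eta (u s) * w (u s))"
  define k2 where "k2 = (\<lambda>s. g T s * eta (u s) * w (u s))"
  have k1c: "continuous_on {0..} k1" using fkc[OF T0(1)] by (simp add: k1_def)
  have k2c: "continuous_on {0..} k2" using gkc[OF T0(1)] by (simp add: k2_def)
  have k1n: "k1 s \<ge> 0" if "s \<ge> 0" for s
    using f_nonneg[OF T0(1) that] eta_nonneg[OF u_nonneg[OF that]] w_nonneg[OF u_nonneg[OF that]]
    by (simp add: k1_def)
  have k2n: "k2 s \<ge> 0" if "s \<ge> 0" for s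
    using g_nonneg[OF T0(1) that] eta_nonneg[OF u_nonneg[OF that]] w_nonneg[OF u_nonneg[OF that]]
    by (simp add: k2_def)
  have fTc: "continuous_on {0..} (\<lambda>s. f T s)" using fc[OF T0(1)] .
  have gTc: "continuous_on {0..} (\<lambda>s. g T s)" using gc[OF T0(1)] .
  define v where "v = (\<lambda>t. c T + integral {0..alpha t} k1 + integral {0..t} k2)"
  define F where "F = (\<lambda>t. integral {0..alpha t} (\<lambda>s. f T s) + integral {0..t} (\<lambda>s. g T s))"
  have v_mono: "v s \<le> v t" if "0 \<le> s" "s \<le> t" for s t
  proof -
    have "alpha s \<le> alpha t" using that by (intro mono_onD[OF alpha_mono]) auto
    then show ?thesis unfolding v_def
      using int_mono0[OF k1c k1n, of "alpha s" "alpha t"] int_mono0[OF k2c k2n, of s t] that by auto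
  qed
  have v_ge: "v t \<ge> c T" if "t \<ge> 0" for t
    unfolding v_def using int_nonneg0[OF k1c k1n] int_nonneg0[OF k2c k2n] by auto
  have cT: "c T > x0" using mono_onD[OF c_mono, of 0 T] T0 x0_lt by auto
  have key: "phi (u s) \<le> v s" if s: "0 \<le> s" "s \<le> T" for s
  proof -
    have as: "0 \<le> alpha s" "alpha s \<le> s" using alpha_nonneg alpha_le s by auto
    have i1: "integral {0..alpha s} (\<lambda>r. f s r * eta (u r) * w (u r)) \<le> integral {0..alpha s} k1"
    proof (rule integral_le)
      show "(\<lambda>r. f s r * eta (u r) * w (u r)) integrable_on {0..alpha s}"
        by (rule integrable_continuous_interval, rule continuous_on_subset[OF fkc[OF s(1)]]) auto
      show "k1 integrable_on {0..alpha s}"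
        by (rule integrable_continuous_interval, rule continuous_on_subset[OF k1c]) auto
      fix r assume r: "r \<in> {0..alpha s}"
      then have "f s r \<le> f T r" using s by (intro mono_onD[OF f_mono]) auto
      moreover have "eta (u r) * w (u r) \<ge> 0"
        using eta_nonneg w_nonneg u_nonneg r by auto
      ultimately have "f s r * (eta (u r) * w (u r)) \<le> f T r * (eta (u r) * w (u r))"
        by (rule mult_right_mono)
      then show "f s r * eta (u r) * w (u r) \<le> k1 r" by (simp add: k1_def mult.assoc)
    qed
    have i2: "integral {0..s} (\<lambda>r. g s r * eta (u r) * w (u r)) \<le> integral {0..s} k2"
    proof (rule integral_le)
      show "(\<lambda>r. g s r * eta (u r) * w (u r)) integrable_on {0..s}"
        by (rule integrable_continuous_interval, rule continuous_on_subset[OF gkc[OF s(1)]]) auto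
      show "k2 integrable_on {0..s}"
        by (rule integrable_continuous_interval, rule continuous_on_subset[OF k2c]) auto
      fix r assume r: "r \<in> {0..s}"
      then have "g s r \<le> g T r" using s by (intro mono_onD[OF g_mono]) auto
      moreover have "eta (u r) * w (u r) \<ge> 0"
        using eta_nonneg w_nonneg u_nonneg r by auto
      ultimately have "g s r * (eta (u r) * w (u r)) \<le> g T r * (eta (u r) * w (u r))"
        by (rule mult_right_mono)
      then show "g s r * eta (u r) * w (u r) \<le> k2 r" by (simp add: k2_def mult.assoc)
    qed
    have "c s \<le> c T" using s by (intro mono_onD[OF c_mono]) auto
    then show ?thesis using u_ineq[OF s(1)] i1 i2 by (simp add: v_def)
  qed
  have aT: "alpha ` {0..T} \<subseteq> {0..T}" using alpha_nonneg alpha_le by force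
  have alpha_cT: "continuous_on {0..T} alpha" using alpha_cont by (rule continuous_on_subset) auto
  have compc: "continuous_on {0..T} (\<lambda>t. integral {0..alpha t} kk)" if "continuous_on {0..} kk" for kk :: "real \<Rightarrow> real"
    by (rule continuous_on_compose2[OF int_cont0[OF that, of T] alpha_cT aT])
  have idc: "continuous_on {0..T} (\<lambda>t. integral {0..t} kk)" if "continuous_on {0..} kk" for kk :: "real \<Rightarrow> real"
    using int_cont0[OF that, of T] .
  have v_cont: "continuous_on {0..T} v"
    unfolding v_def by (intro continuous_on_add continuous_on_const compc[OF k1c] idc[OF k2c])
  have F_cont: "continuous_on {0..T} F"
    unfolding F_def by (intro continuous_on_add compc[OF fTc] idc[OF gTc])
  have vx0: "v t > x0" if "t \<ge> 0" for t using v_ge[OF that] cT by auto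
  have K_cont: "continuous_on {0..T} (\<lambda>t. Ps (G (v t)))"
  proof (rule continuous_on_compose2[OF _ v_cont, of "v ` {0..T}"])
    show "continuous_on (v ` {0..T}) (\<lambda>x. Ps (G x))"
      by (rule continuous_at_imp_continuous_on) (use DERIV_isCont[OF K_deriv] vx0 in auto)
  qed auto
  have dcomp: "((\<lambda>t. integral {0..alpha t} kk) has_real_derivative kk (alpha t) * alpha' t) (at t)"
    if "continuous_on {0..} kk" "t > 0" for kk :: "real \<Rightarrow> real" and t
  proof (rule int_comp_deriv[where S="{0<..}", OF that(1)])
    show "alpha ` {0<..} \<subseteq> {0..}" using alpha_nonneg by force
    show "(alpha has_real_derivative alpha' t) (at t)" by (rule a_der_at[OF that(2)])
  qed (use that in auto)
  have did: "((\<lambda>t. integral {0..t} kk) has_real_derivative kk t) (at t)"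
    if "continuous_on {0..} kk" "t > 0" for kk :: "real \<Rightarrow> real" and t
  proof -
    have "((\<lambda>x. integral {0..x} kk) has_real_derivative kk t * 1) (at t)"
      by (rule int_comp_deriv[where S="{0<..}" and \<alpha>="\<lambda>x. x", OF that(1)]) (use that in \<open>auto intro: DERIV_ident\<close>)
    then show ?thesis by simp
  qed
  have v_der: "(v has_real_derivative k1 (alpha t) * alpha' t + k2 t) (at t)" if "t > 0" for t
  proof -
    have "((\<lambda>t. c T + integral {0..alpha t} k1 + integral {0..t} k2) has_real_derivative
            0 + k1 (alpha t) * alpha' t + k2 t) (at t)"
      using DERIV_add[OF DERIV_add[OF DERIV_const[of "c T"] dcomp[OF k1c that]] did[OF k2c that]] by simp
    then show ?thesis by (simp add: v_def)
  qed
  have F_der: "(F has_real_derivative f T (alpha t) * alpha' t + g T t) (at t)" if "t > 0" for t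
    unfolding F_def using DERIV_add[OF dcomp[OF fTc that] did[OF gTc that]] by simp
  define D where "D = (\<lambda>t. Ps (G (v t)) - F t)"
  have D_le: "D T \<le> D 0"
  proof (rule DERIV_nonpos_imp_decreasing_open[OF T0(1)])
    show "continuous_on {0..T} D" unfolding D_def by (intro continuous_on_diff K_cont F_cont)
    fix t assume t: "0 < t" "t < T"
    define p where "p = pinv (v t)"
    have vt: "v t > x0" using vx0 t by auto
    have pp: "p > 0" using P5[of "v t"] vt x0_ge by (auto simp: p_def)
    have kv: "k (v t) = 1 / eta p" by (simp add: k_def p_def)
    have ep: "eta p > 0" "w p > 0" using eta_pos w_pos pp by auto
    have at: "0 \<le> alpha t" "alpha t \<le> t" using alpha_nonneg alpha_le t by auto
    have ule: "u r \<le> p" if "0 \<le> r" "r \<le> t" for r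
    proof -
      have "phi (u r) \<le> v r" using key[of r] that t by auto
      also have "\<dots> \<le> v t" using v_mono that by auto
      finally have h: "phi (u r) \<le> v t" .
      have "phi 0 \<le> phi (u r)" using phi_ge u_nonneg that by auto
      then have "pinv (phi (u r)) \<le> pinv (v t)" by (rule P3[OF _ h])
      then show ?thesis using P2[OF u_nonneg[OF that(1)]] by (simp add: p_def)
    qed
    have mon: "eta (u r) * w (u r) \<le> eta p * w p" if "0 \<le> r" "r \<le> t" for r
    proof -
      have e1: "eta (u r) \<le> eta p"
        by (rule mono_onD[OF eta_mono]) (use ule[OF that] u_nonneg[OF that(1)] in auto)
      have e2: "w (u r) \<le> w p"
        by (rule mono_onD[OF w_mono]) (use ule[OF that] u_nonneg[OF that(1)] in auto)
      have e3: "0 \<le> eta p" using ep by simp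
      have e4: "0 \<le> w (u r)" using w_nonneg u_nonneg that by simp
      show ?thesis by (rule mult_mono[OF e1 e2 e3 e4])
    qed
    define V where "V = k1 (alpha t) * alpha' t + k2 t"
    define W where "W = f T (alpha t) * alpha' t + g T t"
    have "k1 (alpha t) \<le> f T (alpha t) * (eta p * w p)"
      using mult_left_mono[OF mon[OF at] f_nonneg[OF T0(1) at(1)]] by (simp add: k1_def mult.assoc)
    then have "k1 (alpha t) * alpha' t \<le> f T (alpha t) * (eta p * w p) * alpha' t"
      using a_nn t by (intro mult_right_mono) auto
    moreover have "k2 t \<le> g T t * (eta p * w p)"
      using mult_left_mono[OF mon[of t] g_nonneg[OF T0(1), of t]] t by (simp add: k2_def mult.assoc)
    ultimately have VW: "V \<le> W * (eta p * w p)" by (simp add: V_def W_def algebra_simps)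
    have "(1 / w p * (1 / eta p)) * V \<le> W"
    proof -
      have "(1 / w p * (1 / eta p)) * V = V / (eta p * w p)" by (simp add: field_simps)
      also have "\<dots> \<le> W" using VW ep by (simp add: pos_divide_le_eq)
      finally show ?thesis .
    qed
    moreover have "(D has_real_derivative (1 / w p * k (v t)) * V - W) (at t)"
      unfolding D_def V_def W_def p_def
      using DERIV_diff[OF DERIV_chain2[OF K_deriv[OF vt] v_der[OF t(1)]] F_der[OF t(1)]] by simp
    ultimately show "\<exists>y. (D has_real_derivative y) (at t) \<and> y \<le> 0" using kv by auto
  qed
  have v0: "v 0 = c T" by (simp add: v_def alpha0)
  have F0: "F 0 = 0" by (simp add: F_def alpha0)
  have main: "Ps (G (v T)) \<le> Ps (G (c T)) + F T" using D_le by (simp add: D_def v0 F0)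
  define X where "X = Psi_fun phi eta w x0 x1 (G_fun phi eta x0 (c T))
              + integral {0..alpha T} (\<lambda>s. f T s) + integral {0..T} (\<lambda>s. g T s)"
  have X_eq: "X = Ps (G (c T)) + F T" by (simp add: X_def Ps_def G_def F_def)
  have "X \<in> Ps ` {0<..}" using tau_dom[OF T] by (simp add: X_def Ps_def)
  then obtain ys where ys: "ys > 0" "X = Ps ys" by auto
  have inj: "inj_on Ps {0<..}"
    by (rule strict_mono_on_imp_inj_on) (auto intro!: strict_mono_onI Ps_strict)
  have Pi: "Psi_inv phi eta w x0 x1 X = ys"
    unfolding Psi_inv_def Ps_def[symmetric] using the_inv_into_f_f[OF inj, of ys] ys by auto
  have vT: "v T > x0" using vx0 T0 by auto
  have GvT: "G (v T) \<le> ys"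
  proof (rule ccontr)
    assume "\<not> ?thesis"
    then have "Ps ys < Ps (G (v T))" using Ps_strict ys by auto
    then show False using main X_eq ys by auto
  qed
  have "v T \<le> Gi ys" using Q3[OF G_nonneg GvT] Q2 vT by auto
  then have "phi (u T) \<le> Gi ys" using key[of T] T0 by auto
  then have "pinv (phi (u T)) \<le> pinv (Gi ys)" using P3 phi_ge u_nonneg T0 by auto
  then have "u T \<le> pinv (Gi (Psi_inv phi eta w x0 x1 X))" using P2 u_nonneg T0 Pi by auto
  then show "u T \<le> phi_inv phi (G_inv phi eta x0 (Psi_inv phi eta w x0 x1
             (Psi_fun phi eta w x0 x1 (G_fun phi eta x0 (c T))
              + integral {0..alpha T} (\<lambda>s. f T s) + integral {0..T} (\<lambda>s. g T s))))"
    by (simp add: X_def pinv_def Gi_def)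
qed

end
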